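(* Setting: integers $N,Q,S\ge1$, $1\le M\le N$, $J\ge1$; $\mathbf{H}\in\mathbb{R}^{Q\times N}\setminus\{\mathbf{0}\}$, $\mathbf{y}\in\mathbb{R}^Q$, a real matrix $\mathbf{V}_0$ with $N$ columns, and for $s\in\{1,\dots,S\}$: $P_s\ge1$, $\mathbf{V}_s\in\mathbb{R}^{P_s\times N}$, $\mathbf{c}_s\in\mathbb{R}^{P_s}$; $\Phi:\mathbb{R}^Q\to\mathbb{R}$; functions $\psi_{s,\delta}:\mathbb{R}\to\mathbb{R}$ for $\delta>0$; $F_\delta(\mathbf{x})=\Phi(\mathbf{H}\mathbf{x}-\mathbf{y})+\sum_{s=1}^S\psi_{s,\delta}(\|\mathbf{V}_s\mathbf{x}-\mathbf{c}_s\|)+\|\mathbf{V}_0\mathbf{x}\|^2$. Assume: (A1i) $\Phi$ is continuous and coercive; (A1ii) for every $\delta>0$ and $s$, $\psi_{s,\delta}$ is continuous and nonnegative; (A1iii) $\operatorname{Ker}\mathbf{H}\cap\operatorname{Ker}\mathbf{V}_0=\{\mathbf{0}\}$. Fix $\delta>0$ and assume: (A3i) $\Phi$ is differentiable with $L$-Lipschitz gradient; (A3ii) each $\psi_{s,\delta}$ is differentiable; (A3iii) each $t\mapsto\psi_{s,\delta}(\sqrt t)$ is concave on $[0,+\infty)$; (A3iv) for each $s$ there is $\overline\omega_s\in[0,+\infty)$ with $0\le\dot\psi_{s,\delta}(t)\le\overline\omega_s t$ for all $t>0$, and $\lim_{t\to0}\dot\psi_{s,\delta}(t)/t\in\mathbb{R}$.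 Let $\omega_{s,\delta}(t)=\dot\psi_{s,\delta}(t)/t$, extended by continuity at $0$, fix $\mu\in[L,+\infty)$ and set $\mathbf{A}(\mathbf{x})=\mu\mathbf{H}^\top\mathbf{H}+2\mathbf{V}_0^\top\mathbf{V}_0+\mathbf{V}^\top\operatorname{Diag}\{\mathbf{b}(\mathbf{x})\}\mathbf{V}$, where $\mathbf{V}=[\mathbf{V}_1^\top|\cdots|\mathbf{V}_S^\top]^\top$ and $b_{P_1+\dots+P_{s-1}+p}(\mathbf{x})=\omega_{s,\delta}(\|\mathbf{V}_s\mathbf{x}-\mathbf{c}_s\|)$ for $p\in\{1,\dots,P_s\}$. Consider the iteration: $\mathbf{x}_0\in\mathbb{R}^N$; for each $k\in\mathbb{N}$, given any matrix $\mathbf{D}_k\in\mathbb{R}^{N\times M}$, set $\mathbf{u}_k^0=\mathbf{0}$ and for $j=1,\dots,J$: $\mathbf{B}_k^{j-1}=\mathbf{D}_k^\top\mathbf{A}(\mathbf{x}_k+\mathbf{D}_k\mathbf{u}_k^{j-1})\mathbf{D}_k$, $\mathbf{u}_k^j=\mathbf{u}_k^{j-1}-(\mathbf{B}_k^{j-1})^{\dagger}\mathbf{D}_k^\top\nabla F_\delta(\mathbf{x}_k+\mathbf{D}_k\mathbf{u}_k^{j-1})$ (pseudo-inverse $\dagger$); then $\mathbf{x}_{k+1}=\mathbf{x}_k+\mathbf{D}_k\mathbf{u}_k^J$. Write $\mathbf{x}_k^j=\mathbf{x}_k+\mathbf{D}_k\mathbf{u}_k^j$. Claim: for every $k\in\mathbb{N}$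 and $j\in\{0,\dots,J-1\}$, $$F_\delta(\mathbf{x}_k^j)-F_\delta(\mathbf{x}_k^{j+1})\ge\frac{\eta}{2}\|\mathbf{x}_k^{j+1}-\mathbf{x}_k^j\|^2,$$ where $\eta>0$ is the smallest eigenvalue of $\mu\mathbf{H}^\top\mathbf{H}+2\mathbf{V}_0^\top\mathbf{V}_0$.
   Context: $\|\cdot\|$ is the Euclidean norm; $\dot\psi_{s,\delta}$ is the derivative of $\psi_{s,\delta}$. *)

theory Defs
  imports "HOL-Analysis.Analysis"
begin

definition grad :: "('a::euclidean_space \<Rightarrow> real) \<Rightarrow> 'a \<Rightarrow> 'a" where
  "grad f x = (THE g. (f has_derivative (\<lambda>h. g \<bullet> h)) (at x))"

definition coercive :: "('a::real_normed_vector \<Rightarrow> real) \<Rightarrow> bool" where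
  "coercive f \<longleftrightarrow> filterlim f at_top at_infinity"

definition pinv :: "real^'m^'k \<Rightarrow> real^'k^'m" where
  "pinv A = (THE X. A ** X ** A = A \<and> X ** A ** X = X \<and>
                    transpose (A ** X) = A ** X \<and> transpose (X ** A) = X ** A)"

definition Diag :: "real^'p \<Rightarrow> real^'p^'p" where
  "Diag b = (\<chi> i j. if i = j then b $ i else 0)"

definition is_eigenvalue :: "real^'n^'n \<Rightarrow> real \<Rightarrow> bool" where
  "is_eigenvalue A l \<longleftrightarrow> (\<exists>v. v \<noteq> 0 \<and> A *v v = l *\<^sub>R v)"

definition min_eigenvalue :: "real^'n^'n \<Rightarrow> real" where
  "min_eigenvalue A = Min {l. is_eigenvalue A l}"

text \<open>The stacked matrix V (rows indexed by 'p) is split into blocks V_1,...,V_S: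
  row p belongs to block blk p.  blocknorm gives the Euclidean norm of V_s x - c_s.\<close>
definition blocknorm :: "real^'n^'p \<Rightarrow> real^'p \<Rightarrow> ('p \<Rightarrow> nat) \<Rightarrow> nat \<Rightarrow> real^'n \<Rightarrow> real" where
  "blocknorm V c blk s x = sqrt (\<Sum>p\<in>{p. blk p = s}. ((V *v x - c) $ p)^2)"

definition Fdelta :: "(real^'q \<Rightarrow> real) \<Rightarrow> real^'n^'q \<Rightarrow> real^'q \<Rightarrow>
    (nat \<Rightarrow> real \<Rightarrow> real \<Rightarrow> real) \<Rightarrow> real \<Rightarrow> nat \<Rightarrow> real^'n^'p \<Rightarrow> real^'p \<Rightarrow> ('p \<Rightarrow> nat) \<Rightarrow>
    real^'n^'r \<Rightarrow> real^'n \<Rightarrow> real" where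
  "Fdelta \<Phi> H y psi \<delta> S V c blk V0 x =
     \<Phi> (H *v x - y) + (\<Sum>s=1..S. psi s \<delta> (blocknorm V c blk s x)) + (norm (V0 *v x))^2"

definition omega :: "(real \<Rightarrow> real) \<Rightarrow> real \<Rightarrow> real" where
  "omega \<psi> t = (if t = 0 then Lim (at 0) (\<lambda>t. deriv \<psi> t / t) else deriv \<psi> t / t)"

definition Amat :: "real \<Rightarrow> real^'n^'q \<Rightarrow> real^'n^'r \<Rightarrow> (nat \<Rightarrow> real \<Rightarrow> real \<Rightarrow> real) \<Rightarrow> real \<Rightarrow>
    real^'n^'p \<Rightarrow> real^'p \<Rightarrow> ('p \<Rightarrow> nat) \<Rightarrow> real^'n \<Rightarrow> real^'n^'n" where
  "Amat \<mu> H V0 psi \<delta> V c blk x =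
     \<mu> *\<^sub>R (transpose H ** H) + 2 *\<^sub>R (transpose V0 ** V0) +
     transpose V ** Diag (\<chi> p. omega (psi (blk p) \<delta>) (blocknorm V c blk (blk p) x)) ** V"

end

theory Submission
  imports Defs "HOL-Analysis.Analysis"
begin

lemma mv_inner: fixes A :: "real^'n^'m" shows "(A *v x) \<bullet> y = x \<bullet> (transpose A *v y)"
  by (metis dot_lmul_matrix inner_commute transpose_matrix_vector)

lemma sym_from_inner:
  fixes M :: "real^'n^'n"
  assumes "\<And>a b. (M *v a) \<bullet> b = a \<bullet> (M *v b)"
  shows "transpose M = M"
proof -
  have "transpose M *v a = M *v a" for a
  proof -
    have e: "(transpose M *v a) \<bullet> b = (M *v a) \<bullet> b" for b
      by (metis assms inner_commute mv_inner transpose_transpose)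
    define u where "u = transpose M *v a - M *v a"
    have "u \<bullet> u = (transpose M *v a) \<bullet> u - (M *v a) \<bullet> u"
      unfolding u_def by (simp only: inner_diff_left)
    also have "\<dots> = 0" by (simp only: e)
    finally have "u \<bullet> u = 0" .
    then have "u = 0" by simp
    then show ?thesis unfolding u_def by simp
  qed
  then show ?thesis by (simp add: matrix_eq)
qed

definition penrose :: "real^'m^'k \<Rightarrow> real^'k^'m \<Rightarrow> bool" where
  "penrose A X \<longleftrightarrow> A ** X ** A = A \<and> X ** A ** X = X \<and>
                    transpose (A ** X) = A ** X \<and> transpose (X ** A) = X ** A"

lemma penrose_unique:
  assumes "penrose A X" "penrose A Y" shows "X = Y"
proof -
  have a1: "A ** X ** A = A" and a2: "X ** A ** X = X" and a3: "transpose (A ** X) = A ** X"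
    and a4: "transpose (X ** A) = X ** A" using assms(1) by (auto simp: penrose_def)
  have b1: "A ** Y ** A = A" and b2: "Y ** A ** Y = Y" and b3: "transpose (A ** Y) = A ** Y"
    and b4: "transpose (Y ** A) = Y ** A" using assms(2) by (auto simp: penrose_def)
  have tA: "transpose A = transpose A ** transpose Y ** transpose A"
    by (metis b1 matrix_transpose_mul matrix_mul_assoc)
  have "X = X ** (A ** X)" using a2 by (simp add: matrix_mul_assoc)
  also have "\<dots> = X ** transpose (A ** X)" using a3 by simp
  also have "\<dots> = X ** transpose X ** transpose A" by (simp add: matrix_transpose_mul matrix_mul_assoc)
  also have "\<dots> = X ** transpose X ** (transpose A ** transpose Y ** transpose A)" using tA by simp
  also have "\<dots> = X ** (transpose X ** transpose A) ** (transpose Y ** transpose A)" by (simp add: matrix_mul_assoc)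
  also have "\<dots> = X ** transpose (A ** X) ** transpose (A ** Y)" by (simp add: matrix_transpose_mul)
  also have "\<dots> = (X ** A ** X) ** A ** Y" using a3 b3 by (simp add: matrix_mul_assoc)
  also have "\<dots> = X ** A ** Y" using a2 by simp
  finally have X: "X = X ** A ** Y" .
  have tA2: "transpose A = transpose A ** transpose X ** transpose A"
    by (metis a1 matrix_transpose_mul matrix_mul_assoc)
  have "Y = (Y ** A) ** Y" using b2 by (simp add: matrix_mul_assoc)
  also have "\<dots> = transpose (Y ** A) ** Y" using b4 by simp
  also have "\<dots> = transpose A ** transpose Y ** Y" by (simp add: matrix_transpose_mul)
  also have "\<dots> = (transpose A ** transpose X ** transpose A) ** transpose Y ** Y" using tA2 by simp
  also have "\<dots> = (transpose A ** transpose X) ** (transpose A ** transpose Y) ** Y" by (simp add: matrix_mul_assoc)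
  also have "\<dots> = transpose (X ** A) ** transpose (Y ** A) ** Y" by (simp add: matrix_transpose_mul)
  also have "\<dots> = X ** A ** (Y ** A ** Y)" using a4 b4 by (simp add: matrix_mul_assoc)
  also have "\<dots> = X ** A ** Y" using b2 by simp
  finally show ?thesis using X by simp
qed

lemma mv3: "(A ** B ** C) *v v = A *v (B *v (C *v v))"
  by (simp add: matrix_vector_mul_assoc matrix_mul_assoc)
lemma mv2: "(A ** B) *v v = A *v (B *v v)"
  by (simp add: matrix_vector_mul_assoc)

lemma penrose_exists_sym:
  fixes B :: "real^'m^'m"
  assumes symB: "transpose B = B"
  shows "\<exists>X. penrose B X"
proof -
  define W where "W = range (\<lambda>v. B *v v)"
  have sB: "(B *v a) \<bullet> b = a \<bullet> (B *v b)" for a b using mv_inner[of B a b] symB by simp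
  have spanW: "span W = W"
    unfolding W_def using span_linear_image[OF matrix_vector_mul_linear, of B UNIV] by simp
  have BW: "B *v v \<in> W" for v unfolding W_def by auto
  have Wsub: "subspace W" using spanW by (metis subspace_span)
  have exP: "\<exists>p. p \<in> W \<and> (\<forall>w\<in>W. (y - p) \<bullet> w = 0)" for y
  proof -
    obtain a z where "a \<in> span W" "\<And>w. w \<in> span W \<Longrightarrow> orthogonal z w" "y = a + z"
      using orthogonal_subspace_decomp_exists[of W y] by blast
    then show ?thesis using spanW by (auto simp: orthogonal_def intro!: exI[of _ a])
  qed
  have uniqP: "p = q" if "p \<in> W" "\<forall>w\<in>W. (y - p) \<bullet> w = 0" "q \<in> W" "\<forall>w\<in>W. (y - q) \<bullet> w = 0" for y p q
  proof -
    have "p - q \<in> W" using that Wsub by (simp add: subspace_diff)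
    then have "(y - q) \<bullet> (p - q) - (y - p) \<bullet> (p - q) = 0" using that by auto
    then have "(p - q) \<bullet> (p - q) = 0" by (simp add: algebra_simps inner_diff_left inner_diff_right)
    then show ?thesis by simp
  qed
  have Kz: "B *v z = 0" if "\<forall>w\<in>W. z \<bullet> w = 0" for z
  proof -
    have "(B *v z) \<bullet> (B *v z) = z \<bullet> (B *v (B *v z))" by (rule sB)
    also have "\<dots> = 0" using that BW by auto
    finally show ?thesis by simp
  qed
  have injW: "w = 0" if wW: "w \<in> W" and Bw: "B *v w = 0" for w
  proof -
    obtain v where v: "w = B *v v" using wW unfolding W_def by auto
    have "w \<bullet> w = v \<bullet> (B *v w)" using sB v by simp
    then show ?thesis using Bw by simp
  qed
  define P where "P y = (SOME p. p \<in> W \<and> (\<forall>w\<in>W. (y - p) \<bullet> w = 0))" for y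
  have P: "P y \<in> W \<and> (\<forall>w\<in>W. (y - P y) \<bullet> w = 0)" for y
    unfolding P_def by (rule someI_ex, rule exP)
  have Pchar: "P y = p" if "p \<in> W" "\<forall>w\<in>W. (y - p) \<bullet> w = 0" for y p
    using uniqP[OF conjunct1[OF P] conjunct2[OF P] that] .
  have PW: "P p = p" if "p \<in> W" for p using Pchar[OF that] by simp
  have BP: "B *v P v = B *v v" for v
  proof -
    have "B *v (v - P v) = 0" using Kz P by blast
    then show ?thesis by (simp add: matrix_vector_mult_diff_distrib)
  qed
  have PW1: "P y \<in> W" for y using P by blast
  have PO: "(y - P y) \<bullet> w = 0" if "w \<in> W" for y w using P that by blast
  have linP: "linear P"
  proof (rule linearI)
    fix a b
    show "P (a + b) = P a + P b"
    proof (rule Pchar)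
      show "P a + P b \<in> W" using PW1 Wsub by (simp add: subspace_add)
      show "\<forall>w\<in>W. (a + b - (P a + P b)) \<bullet> w = 0"
      proof
        fix w assume w: "w \<in> W"
        have "a + b - (P a + P b) = (a - P a) + (b - P b)" by simp
        then show "(a + b - (P a + P b)) \<bullet> w = 0" using PO[OF w, of a] PO[OF w, of b]
          by (simp only: inner_add_left)
      qed
    qed
  next
    fix c :: real and a
    show "P (c *\<^sub>R a) = c *\<^sub>R P a"
    proof (rule Pchar)
      show "c *\<^sub>R P a \<in> W" using PW1 Wsub by (simp add: subspace_scale)
      show "\<forall>w\<in>W. (c *\<^sub>R a - c *\<^sub>R P a) \<bullet> w = 0"
      proof
        fix w assume w: "w \<in> W"
        have "c *\<^sub>R a - c *\<^sub>R P a = c *\<^sub>R (a - P a)" by (simp add: scaleR_diff_right)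
        then show "(c *\<^sub>R a - c *\<^sub>R P a) \<bullet> w = 0" using PO[OF w, of a]
          by (simp only: inner_scaleR_left)
      qed
    qed
  qed
  have symP: "P a \<bullet> b = a \<bullet> P b" for a b
  proof -
    have h1: "(b - P b) \<bullet> P a = 0" using P[of b] P[of a] by blast
    have h2: "(a - P a) \<bullet> P b = 0" using P[of b] P[of a] by blast
    have "b \<bullet> P a = P b \<bullet> P a" using h1 inner_diff_left[of b "P b" "P a"] by linarith
    moreover have "a \<bullet> P b = P a \<bullet> P b" using h2 inner_diff_left[of a "P a" "P b"] by linarith
    ultimately show ?thesis by (metis inner_commute)
  qed
  have exX: "\<exists>w. w \<in> W \<and> B *v w = P y" for y
  proof -
    obtain v where v: "P y = B *v v" using PW1[of y] unfolding W_def by auto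
    show ?thesis using PW1[of v] BP[of v] v by auto
  qed
  define Xf where "Xf y = (SOME w. w \<in> W \<and> B *v w = P y)" for y
  have Xf: "Xf y \<in> W \<and> B *v Xf y = P y" for y
    unfolding Xf_def by (rule someI_ex, rule exX)
  have XW: "Xf y \<in> W" for y using Xf by blast
  have XB0: "B *v Xf y = P y" for y using Xf by blast
  have Xchar: "Xf y = w" if "w \<in> W" "B *v w = P y" for y w
  proof -
    have "Xf y - w \<in> W" using XW that Wsub by (simp add: subspace_diff)
    moreover have "B *v (Xf y - w) = 0" using XB0 that by (simp add: matrix_vector_mult_diff_distrib)
    ultimately show ?thesis using injW by fastforce
  qed
  have linX: "linear Xf"
  proof (rule linearI)
    fix a b
    show "Xf (a + b) = Xf a + Xf b"
    proof (rule Xchar)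
      show "Xf a + Xf b \<in> W" using XW Wsub by (simp add: subspace_add)
      show "B *v (Xf a + Xf b) = P (a + b)"
        by (simp add: matrix_vector_right_distrib XB0 linear_add[OF linP])
    qed
  next
    fix c :: real and a
    show "Xf (c *\<^sub>R a) = c *\<^sub>R Xf a"
    proof (rule Xchar)
      show "c *\<^sub>R Xf a \<in> W" using XW Wsub by (simp add: subspace_scale)
      show "B *v (c *\<^sub>R Xf a) = P (c *\<^sub>R a)"
        by (simp add: matrix_vector_mult_scaleR XB0 linear_scale[OF linP])
    qed
  qed
  define X where "X = matrix Xf"
  have Xv: "X *v y = Xf y" for y unfolding X_def
    using fun_cong[OF matrix_vector_mul(2)[OF linX]] by simp
  have XB: "Xf (B *v v) = P v" for v
  proof (rule Xchar)
    show "P v \<in> W" by (rule PW1)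
    show "B *v P v = P (B *v v)" using BP PW[OF BW] by simp
  qed
  have XPy: "Xf (P y) = Xf y" for y
  proof (rule Xchar)
    show "Xf y \<in> W" by (rule XW)
    show "B *v Xf y = P (P y)" using XB0 PW[OF PW1] by simp
  qed
  have "B ** X ** B = B"
    unfolding matrix_eq by (simp add: mv3 Xv XB BP)
  moreover have "X ** B ** X = X"
    unfolding matrix_eq by (simp add: mv3 Xv XB0 XPy)
  moreover have "transpose (B ** X) = B ** X"
    by (rule sym_from_inner) (simp add: mv2 Xv XB0 symP)
  moreover have "transpose (X ** B) = X ** B"
    by (rule sym_from_inner) (simp add: mv2 Xv XB symP)
  ultimately show ?thesis unfolding penrose_def by blast
qed

lemma pinv_sym:
  fixes B :: "real^'m^'m"
  assumes symB: "transpose B = B"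
  shows "penrose B (pinv B)" "transpose (pinv B) = pinv B"
proof -
  obtain X where X: "penrose B X" using penrose_exists_sym[OF symB] by blast
  have "pinv B = X" unfolding pinv_def
  proof (rule the_equality)
    show "B ** X ** B = B \<and> X ** B ** X = X \<and> transpose (B ** X) = B ** X \<and> transpose (X ** B) = X ** B"
      using X unfolding penrose_def .
  next
    fix Y assume "B ** Y ** B = B \<and> Y ** B ** Y = Y \<and> transpose (B ** Y) = B ** Y \<and> transpose (Y ** B) = Y ** B"
    then have "penrose B Y" unfolding penrose_def .
    then show "Y = X" using penrose_unique X by blast
  qed
  then show PB: "penrose B (pinv B)" using X by simp
  define Y where "Y = pinv B"
  have y1: "B ** Y ** B = B" and y2: "Y ** B ** Y = Y" and y3: "transpose (B ** Y) = B ** Y"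
    and y4: "transpose (Y ** B) = Y ** B" using PB unfolding penrose_def Y_def by auto
  have tB: "transpose B = B" by (rule symB)
  have "B ** transpose Y ** B = transpose (B ** Y ** B)"
    by (simp add: matrix_transpose_mul tB matrix_mul_assoc)
  also have "\<dots> = B" using y1 tB by simp
  finally have z1: "B ** transpose Y ** B = B" .
  have "transpose Y ** B ** transpose Y = transpose (Y ** B ** Y)"
    by (simp add: matrix_transpose_mul tB matrix_mul_assoc)
  also have "\<dots> = transpose Y" using y2 by simp
  finally have z2: "transpose Y ** B ** transpose Y = transpose Y" .
  have z3a: "B ** transpose Y = Y ** B"
    using y4 by (simp add: matrix_transpose_mul tB)
  have z4a: "transpose Y ** B = B ** Y"
    using y3 by (simp add: matrix_transpose_mul tB)
  have z3: "transpose (B ** transpose Y) = B ** transpose Y"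
    unfolding z3a using y4 .
  have z4: "transpose (transpose Y ** B) = transpose Y ** B"
    unfolding z4a using y3 .
  have "penrose B (transpose Y)" unfolding penrose_def
    using z1 z2 z3 z4 by blast
  then show "transpose (pinv B) = pinv B" using penrose_unique PB Y_def by blast
qed

lemma quad_expand:
  fixes M :: "real^'n^'n"
  assumes symM: "transpose M = M"
  shows "(v + t *\<^sub>R w) \<bullet> (M *v (v + t *\<^sub>R w)) =
         v \<bullet> (M *v v) + 2 * t * (w \<bullet> (M *v v)) + t^2 * (w \<bullet> (M *v w))"
proof -
  have s: "v \<bullet> (M *v w) = w \<bullet> (M *v v)"
    using mv_inner[of M w v] symM by (simp add: inner_commute)
  show ?thesis
    by (simp add: matrix_vector_right_distrib matrix_vector_mult_scaleR inner_add_left inner_add_right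
        s power2_eq_square algebra_simps)
qed

lemma min_eig:
  fixes M :: "real^'n^'n"
  assumes symM: "transpose M = M"
    and pd: "\<And>x. x \<noteq> 0 \<Longrightarrow> x \<bullet> (M *v x) > 0"
  shows "min_eigenvalue M > 0 \<and> (\<forall>x. min_eigenvalue M * (norm x)^2 \<le> x \<bullet> (M *v x))"
proof -
  define q where "q x = x \<bullet> (M *v x)" for x
  have cq: "continuous_on (sphere 0 1) q" unfolding q_def
    by (intro continuous_intros)
  have ne: "sphere (0::real^'n) 1 \<noteq> {}" by simp
  obtain v where v: "v \<in> sphere 0 1" and vmin: "\<And>y. y \<in> sphere 0 1 \<Longrightarrow> q v \<le> q y"
    using continuous_attains_inf[OF compact_sphere ne cq] by blast
  define lam where "lam = q v"
  have nv: "norm v = 1" using v by simp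
  have vnz: "v \<noteq> 0" using nv by auto
  have qscale: "q (c *\<^sub>R x) = c^2 * q x" for c x
    by (simp add: q_def matrix_vector_mult_scaleR power2_eq_square)
  have lower: "lam * (norm x)^2 \<le> q x" for x
  proof (cases "x = 0")
    case True then show ?thesis by (simp add: q_def)
  next
    case False
    define y where "y = (1 / norm x) *\<^sub>R x"
    have "y \<in> sphere 0 1" using False by (simp add: y_def)
    then have "lam \<le> q y" using vmin lam_def by simp
    also have "q y = q x / (norm x)^2" unfolding y_def qscale
      by (simp add: power_divide)
    finally show ?thesis using False by (simp add: field_simps)
  qed
  have f_nonneg: "0 \<le> q x - lam * (x \<bullet> x)" for x
    using lower[of x] by (simp add: power2_norm_eq_inner)
  have fv: "q v - lam * (v \<bullet> v) = 0" using nv lam_def by (simp add: power2_norm_eq_inner[symmetric])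
  have eigv: "M *v v = lam *\<^sub>R v"
  proof -
    define w where "w = M *v v - lam *\<^sub>R v"
    define c where "c = w \<bullet> w"
    define a where "a = q w - lam * (w \<bullet> w)"
    have a0: "a \<ge> 0" using f_nonneg a_def by simp
    have sw: "v \<bullet> (M *v w) = w \<bullet> (M *v v)" using mv_inner[of M w v] symM by (simp add: inner_commute)
    have cw: "w \<bullet> v = v \<bullet> w" by (rule inner_commute)
    have key: "0 \<le> 2 * t * c + t^2 * a" for t
    proof -
      have "0 \<le> q (v + t *\<^sub>R w) - lam * ((v + t *\<^sub>R w) \<bullet> (v + t *\<^sub>R w))" by (rule f_nonneg)
      also have "\<dots> = (q v - lam * (v \<bullet> v)) + 2 * t * (w \<bullet> (M *v v) - lam * (w \<bullet> v)) + t^2 * a"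
        unfolding q_def a_def using quad_expand[OF symM, of v t w]
        by (simp add: inner_add_left inner_add_right power2_eq_square algebra_simps q_def sw cw)
      also have "w \<bullet> (M *v v) - lam * (w \<bullet> v) = c"
        by (simp add: c_def w_def inner_diff_right)
      finally show ?thesis using fv by simp
    qed
    have "c \<le> 0"
    proof (rule ccontr)
      assume "\<not> c \<le> 0"
      then have cp: "c > 0" by simp
      define s where "s = c / (a + 1)"
      have sp: "s > 0" using cp a0 by (simp add: s_def)
      have sa: "s * a = c - s" using a0 by (simp add: s_def field_simps)
      have "0 \<le> 2 * (-s) * c + (-s)^2 * a" by (rule key)
      also have "\<dots> = s * (s * a - 2 * c)" by (simp add: power2_eq_square algebra_simps)
      finally have "0 \<le> s * a - 2 * c" using sp by (simp add: zero_le_mult_iff)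
      then have "0 \<le> - c - s" using sa by simp
      then show False using sp cp by simp
    qed
    then have "w \<bullet> w = 0" using c_def by (metis antisym inner_ge_zero)
    then have "w = 0" by simp
    then show ?thesis by (simp add: w_def)
  qed
  have lam_eig: "is_eigenvalue M lam" unfolding is_eigenvalue_def using vnz eigv by blast
  have lam_le: "lam \<le> l" if ie: "is_eigenvalue M l" for l
  proof -
    obtain u where u: "u \<noteq> 0" "M *v u = l *\<^sub>R u" using ie unfolding is_eigenvalue_def by blast
    have "lam * (norm u)^2 \<le> q u" by (rule lower)
    also have "q u = l * (norm u)^2" by (simp add: q_def u power2_norm_eq_inner)
    finally show ?thesis using u by simp
  qed
  define E where "E = {l. is_eigenvalue M l}"
  define ev where "ev l = (SOME u. u \<noteq> 0 \<and> M *v u = l *\<^sub>R u)" for l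
  have ev: "ev l \<noteq> 0 \<and> M *v ev l = l *\<^sub>R ev l" if "l \<in> E" for l
  proof -
    have "\<exists>u. u \<noteq> 0 \<and> M *v u = l *\<^sub>R u" using that by (simp add: E_def is_eigenvalue_def)
    then show ?thesis unfolding ev_def by (rule someI_ex)
  qed
  have orth: "ev l \<bullet> ev l' = 0" if "l \<in> E" "l' \<in> E" "l \<noteq> l'" for l l'
  proof -
    have "l * (ev l \<bullet> ev l') = (M *v ev l) \<bullet> ev l'" using ev[OF that(1)] by simp
    also have "\<dots> = ev l \<bullet> (M *v ev l')" using mv_inner[of M "ev l" "ev l'"] symM by simp
    also have "\<dots> = l' * (ev l \<bullet> ev l')" using ev[OF that(2)] by simp
    finally have "(l - l') * (ev l \<bullet> ev l') = 0" by (simp add: algebra_simps)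
    then show ?thesis using that(3) by simp
  qed
  have injev: "inj_on ev E"
  proof (rule inj_onI)
    fix l l' assume "l \<in> E" "l' \<in> E" "ev l = ev l'"
    then show "l = l'" using orth[of l l'] ev[of l] by auto
  qed
  have "pairwise orthogonal (ev ` E)"
    unfolding pairwise_def orthogonal_def using orth by auto
  moreover have "0 \<notin> ev ` E" using ev by auto
  ultimately have "independent (ev ` E)" by (rule pairwise_orthogonal_independent)
  then have "finite (ev ` E)" by (rule independent_imp_finite)
  then have fE: "finite E" using injev finite_imageD by blast
  have "min_eigenvalue M = lam" unfolding min_eigenvalue_def
    using fE lam_eig lam_le E_def by (intro Min_eqI) auto
  moreover have "lam > 0" using pd[OF vnz] lam_def q_def by simp
  ultimately show ?thesis using lower q_def by simp
qed

lemma grad_works: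
  fixes f :: "'a::euclidean_space \<Rightarrow> real"
  assumes "f differentiable (at x)"
  shows "(f has_derivative (\<lambda>h. grad f x \<bullet> h)) (at x)"
proof -
  obtain f' where d: "(f has_derivative f') (at x)" using assms differentiable_def by blast
  have lin: "linear f'" using d has_derivative_linear by blast
  define g where "g = (\<Sum>b\<in>Basis. f' b *\<^sub>R b)"
  have gh: "g \<bullet> h = f' h" for h
  proof -
    have "g \<bullet> h = (\<Sum>b\<in>Basis. f' b * (b \<bullet> h))" by (simp add: g_def inner_sum_left)
    also have "\<dots> = (\<Sum>b\<in>Basis. f' ((h \<bullet> b) *\<^sub>R b))"
      by (simp add: linear_scale[OF lin] inner_commute mult.commute)
    also have "\<dots> = f' (\<Sum>b\<in>Basis. (h \<bullet> b) *\<^sub>R b)" by (simp add: linear_sum[OF lin])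
    also have "\<dots> = f' h" by (simp add: euclidean_representation)
    finally show ?thesis .
  qed
  have dg: "(f has_derivative (\<lambda>h. g \<bullet> h)) (at x)" using d gh by simp
  have "grad f x = g" unfolding grad_def
  proof (rule the_equality)
    show "(f has_derivative (\<lambda>h. g \<bullet> h)) (at x)" by (rule dg)
  next
    fix g' assume "(f has_derivative (\<lambda>h. g' \<bullet> h)) (at x)"
    then have e: "(\<lambda>h. g' \<bullet> h) = (\<lambda>h. g \<bullet> h)" using dg has_derivative_unique by blast
    have "(g' - g) \<bullet> (g' - g) = 0" using fun_cong[OF e, of "g' - g"] by (simp add: inner_diff_left)
    then show "g' = g" by simp
  qed
  then show ?thesis using dg by simp
qed

lemma grad_unique:
  fixes f :: "'a::euclidean_space \<Rightarrow> real"
  assumes "(f has_derivative (\<lambda>h. g \<bullet> h)) (at x)"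
  shows "grad f x = g"
proof -
  have "f differentiable (at x)" using assms differentiable_def by blast
  from grad_works[OF this] have "(f has_derivative (\<lambda>h. grad f x \<bullet> h)) (at x)" .
  then have e: "(\<lambda>h. grad f x \<bullet> h) = (\<lambda>h. g \<bullet> h)" using assms has_derivative_unique by blast
  have "(grad f x - g) \<bullet> (grad f x - g) = 0" using fun_cong[OF e, of "grad f x - g"] by (simp add: inner_diff_left)
  then show ?thesis by simp
qed

lemma descent:
  fixes \<Phi> :: "'a::euclidean_space \<Rightarrow> real"
  assumes diff: "\<And>z. \<Phi> differentiable (at z)"
    and lip: "\<And>z w. norm (grad \<Phi> z - grad \<Phi> w) \<le> L * norm (z - w)"
  shows "\<Phi> z \<le> \<Phi> w + grad \<Phi> w \<bullet> (z - w) + L / 2 * (norm (z - w))^2"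
proof -
  define d where "d = z - w"
  define k where "k t = \<Phi> (w + t *\<^sub>R d) - t * (grad \<Phi> w \<bullet> d) - L / 2 * t^2 * (norm d)^2" for t
  have dk: "(k has_real_derivative
      (grad \<Phi> (w + t *\<^sub>R d) \<bullet> d - grad \<Phi> w \<bullet> d - L * t * (norm d)^2)) (at t)" for t
  proof -
    have d1: "((\<lambda>t. w + t *\<^sub>R d) has_derivative (\<lambda>s. s *\<^sub>R d)) (at t)"
      by (auto intro!: derivative_eq_intros)
    have d2: "((\<lambda>t. \<Phi> (w + t *\<^sub>R d)) has_derivative (\<lambda>s. grad \<Phi> (w + t *\<^sub>R d) \<bullet> (s *\<^sub>R d))) (at t)"
      using has_derivative_compose[OF d1 grad_works[OF diff]] by simp
    have d3: "((\<lambda>t. \<Phi> (w + t *\<^sub>R d)) has_real_derivative (grad \<Phi> (w + t *\<^sub>R d) \<bullet> d)) (at t)"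
    proof -
      have "(\<lambda>s. s * (grad \<Phi> (w + t *\<^sub>R d) \<bullet> d)) = (*) (grad \<Phi> (w + t *\<^sub>R d) \<bullet> d)"
        by (auto simp: mult.commute)
      then show ?thesis unfolding has_field_derivative_def using d2 by simp
    qed
    show ?thesis unfolding k_def
      by (rule derivative_eq_intros d3 refl | simp)+
  qed
  have "k 1 \<le> k 0"
  proof (rule DERIV_nonpos_imp_nonincreasing[of 0 1 k])
    fix t :: real assume t: "0 \<le> t" "t \<le> 1"
    have "grad \<Phi> (w + t *\<^sub>R d) \<bullet> d - grad \<Phi> w \<bullet> d = (grad \<Phi> (w + t *\<^sub>R d) - grad \<Phi> w) \<bullet> d"
      by (simp add: inner_diff_left)
    also have "\<dots> \<le> norm (grad \<Phi> (w + t *\<^sub>R d) - grad \<Phi> w) * norm d" by (rule norm_cauchy_schwarz)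
    also have "\<dots> \<le> L * norm (t *\<^sub>R d) * norm d"
      using lip[of "w + t *\<^sub>R d" w] by (intro mult_right_mono) auto
    also have "\<dots> = L * t * (norm d)^2" using t by (simp add: power2_eq_square)
    finally show "\<exists>y. (k has_real_derivative y) (at t) \<and> y \<le> 0" using dk[of t] by (intro exI[of _ _]) auto
  qed simp
  then show ?thesis by (simp add: k_def d_def)
qed

locale psi_ok =
  fixes \<psi> :: "real \<Rightarrow> real" and l :: real
  assumes cont: "continuous_on UNIV \<psi>"
    and diff: "\<And>t. \<psi> differentiable (at t)"
    and conc: "concave_on {0..} (\<lambda>t. \<psi> (sqrt t))"
    and dpos: "\<And>t. t > 0 \<Longrightarrow> 0 \<le> deriv \<psi> t"
    and lim: "((\<lambda>t. deriv \<psi> t / t) \<longlongrightarrow> l) (at 0)"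
begin

lemma D: "(\<psi> has_real_derivative deriv \<psi> t) (at t)"
  using diff DERIV_deriv_iff_real_differentiable by blast

lemma omega0: "omega \<psi> 0 = l"
  unfolding omega_def using tendsto_Lim[OF trivial_limit_at lim] by simp

lemma l_nonneg: "l \<ge> 0"
proof -
  have "((\<lambda>t. deriv \<psi> t / t) \<longlongrightarrow> l) (at_right 0)"
    using lim by (rule tendsto_mono[OF at_le, rotated]) simp
  moreover have "\<forall>\<^sub>F t in at_right 0. 0 \<le> deriv \<psi> t / t"
    using eventually_at_right_less[of "0::real"] by eventually_elim (simp add: dpos)
  ultimately show ?thesis by (intro tendsto_lowerbound) auto
qed

lemma omega_nonneg: "r \<ge> 0 \<Longrightarrow> omega \<psi> r \<ge> 0"
  using omega0 l_nonneg dpos by (cases "r = 0") (auto simp: omega_def)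

lemma tangent:
  assumes rho: "\<rho> > 0" and r: "r \<ge> 0"
  shows "\<psi> r \<le> \<psi> \<rho> + deriv \<psi> \<rho> / \<rho> / 2 * (r^2 - \<rho>^2)"
proof -
  define g where "g t = - \<psi> (sqrt t)" for t
  have cv: "convex_on {0..} g" using conc unfolding g_def concave_on_def .
  have dg: "(g has_real_derivative (- (deriv \<psi> \<rho> * (inverse \<rho> / 2)))) (at (\<rho>^2))"
  proof -
    have "((\<lambda>t. \<psi> (sqrt t)) has_real_derivative (deriv \<psi> (sqrt (\<rho>^2)) * (inverse (sqrt (\<rho>^2)) / 2))) (at (\<rho>^2))"
      by (rule DERIV_chain2[OF D DERIV_real_sqrt]) (use rho in simp)
    then show ?thesis unfolding g_def using rho by (auto intro: DERIV_minus)
  qed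
  have "g (r^2) - g (\<rho>^2) \<ge> (- (deriv \<psi> \<rho> * (inverse \<rho> / 2))) * (r^2 - \<rho>^2)"
    by (rule convex_on_imp_above_tangent[OF cv])
       (use rho dg in \<open>auto intro: has_field_derivative_at_within simp: convex_connected\<close>)
  then show ?thesis using rho r by (simp add: g_def field_simps)
qed

lemma majorize:
  assumes r: "r \<ge> 0" and r0: "r0 \<ge> 0"
  shows "\<psi> r \<le> \<psi> r0 + omega \<psi> r0 / 2 * (r^2 - r0^2)"
proof (cases "r0 = 0")
  case False
  then have "r0 > 0" using r0 by simp
  then show ?thesis using tangent[of r0 r] r by (simp add: omega_def)
next
  case True
  have "\<psi> r \<le> \<psi> 0 + l / 2 * r^2"
  proof (rule tendsto_le[OF trivial_limit_at_right_real])
    show "((\<lambda>\<rho>. \<psi> \<rho> + deriv \<psi> \<rho> / \<rho> / 2 * (r^2 - \<rho>^2)) \<longlongrightarrow> \<psi> 0 + l / 2 * r^2) (at_right 0)"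
    proof -
      have c1: "(\<psi> \<longlongrightarrow> \<psi> 0) (at_right 0)"
        using cont by (metis continuous_on_def UNIV_I tendsto_mono at_le subset_UNIV at_within_open open_UNIV)
      have c2: "((\<lambda>t. deriv \<psi> t / t) \<longlongrightarrow> l) (at_right 0)"
        using lim by (rule tendsto_mono[OF at_le, rotated]) simp
      have c3: "((\<lambda>\<rho>::real. r^2 - \<rho>^2) \<longlongrightarrow> r^2 - 0^2) (at_right 0)"
        by (intro tendsto_intros)
      have "((\<lambda>\<rho>. \<psi> \<rho> + deriv \<psi> \<rho> / \<rho> / 2 * (r^2 - \<rho>^2)) \<longlongrightarrow> \<psi> 0 + l / 2 * (r^2 - 0^2)) (at_right 0)"
        by (intro tendsto_intros c1 c2 c3) simp
      then show ?thesis by simp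
    qed
    show "((\<lambda>\<rho>. \<psi> r) \<longlongrightarrow> \<psi> r) (at_right 0)" by simp
    show "\<forall>\<^sub>F \<rho> in at_right 0. \<psi> r \<le> \<psi> \<rho> + deriv \<psi> \<rho> / \<rho> / 2 * (r^2 - \<rho>^2)"
      using eventually_at_right_less[of "0::real"] by eventually_elim (use tangent r in auto)
  qed
  then show ?thesis using True omega0 by simp
qed

lemma mono0:
  assumes r: "r \<ge> 0" shows "\<psi> 0 \<le> \<psi> r"
proof (cases "r = 0")
  case False
  then have "0 < r" using r by simp
  then obtain z where z: "0 < z" "z < r" "\<psi> r - \<psi> 0 = (r - 0) * deriv \<psi> z"
    using MVT2[of 0 r \<psi> "deriv \<psi>"] D by blast
  have "0 \<le> r * deriv \<psi> z" using dpos[of z] z r by simp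
  then show ?thesis using z by simp
qed simp

end

lemma sumsq_le_norm:
  fixes z :: "real^'p"
  shows "(\<Sum>p\<in>P. (z$p)^2) \<le> (norm z)^2"
proof -
  have "(\<Sum>p\<in>P. (z$p)^2) \<le> (\<Sum>p\<in>UNIV. (z$p)^2)"
    by (rule sum_mono2) auto
  also have "\<dots> = (norm z)^2"
    by (simp only: power2_norm_eq_inner) (simp add: inner_vec_def power2_eq_square)
  finally show ?thesis .
qed

lemma (in psi_ok) psi_bn_deriv:
  fixes V :: "real^'n^'p" and c :: "real^'p" and P :: "'p set"
  defines "bn \<equiv> \<lambda>x. sqrt (\<Sum>p\<in>P. ((V *v x - c)$p)^2)"
  shows "((\<lambda>x. \<psi> (bn x)) has_derivative
           (\<lambda>h. omega \<psi> (bn x0) * (\<Sum>p\<in>P. (V *v x0 - c)$p * (V *v h)$p))) (at x0)"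
proof -
  define N where "N x = (\<Sum>p\<in>P. ((V *v x - c)$p)^2)" for x
  have bnN: "bn x = sqrt (N x)" for x by (simp add: bn_def N_def)
  have N0: "N x \<ge> 0" for x by (simp add: N_def sum_nonneg)
  have comp: "((\<lambda>x. (V *v x - c)$p) has_derivative (\<lambda>h. (V *v h)$p)) (at x)" for p x
  proof -
    have bl: "bounded_linear (\<lambda>h. (V *v h)$p)"
      by (intro bounded_linear_compose[OF bounded_linear_vec_nth] matrix_vector_mul_bounded_linear)
    have "((\<lambda>x. (V *v x)$p - c$p) has_derivative (\<lambda>h. (V *v h)$p - 0)) (at x)"
      by (intro has_derivative_diff bounded_linear.has_derivative[OF bl] has_derivative_const has_derivative_ident)
    then show ?thesis by simp
  qed
  show ?thesis
  proof (cases "N x0 = 0")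
    case False
    then have Np: "N x0 > 0" using N0[of x0] by simp
    define r0 where "r0 = sqrt (N x0)"
    have r0p: "r0 > 0" using Np r0_def by simp
    have dN: "(N has_derivative (\<lambda>h. \<Sum>p\<in>P. 2 * (V *v x0 - c)$p * (V *v h)$p)) (at x0)"
      unfolding N_def
      by (rule derivative_eq_intros comp refl | simp add: power2_eq_square)+ (auto simp: algebra_simps intro!: sum.cong)
    have dps: "((\<lambda>t. \<psi> (sqrt t)) has_real_derivative (deriv \<psi> r0 * (inverse r0 / 2))) (at (N x0))"
      unfolding r0_def by (rule DERIV_chain2[OF D DERIV_real_sqrt[OF Np]])
    have "((\<lambda>x. \<psi> (sqrt (N x))) has_derivative
           (\<lambda>h. (deriv \<psi> r0 * (inverse r0 / 2)) * (\<Sum>p\<in>P. 2 * (V *v x0 - c)$p * (V *v h)$p))) (at x0)"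
      using has_derivative_compose[OF dN dps[unfolded has_field_derivative_def]] by simp
    moreover have "(\<lambda>h. (deriv \<psi> r0 * (inverse r0 / 2)) * (\<Sum>p\<in>P. 2 * (V *v x0 - c)$p * (V *v h)$p))
        = (\<lambda>h. omega \<psi> (bn x0) * (\<Sum>p\<in>P. (V *v x0 - c)$p * (V *v h)$p))"
    proof
      fix h
      have "(\<Sum>p\<in>P. 2 * (V *v x0 - c)$p * (V *v h)$p) = 2 * (\<Sum>p\<in>P. (V *v x0 - c)$p * (V *v h)$p)"
        by (simp add: sum_distrib_left algebra_simps)
      note s2 = this
      show "(deriv \<psi> r0 * (inverse r0 / 2)) * (\<Sum>p\<in>P. 2 * (V *v x0 - c)$p * (V *v h)$p)
          = omega \<psi> (bn x0) * (\<Sum>p\<in>P. (V *v x0 - c)$p * (V *v h)$p)"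
      proof -
        have om: "omega \<psi> (bn x0) = deriv \<psi> r0 / r0" using r0p by (simp add: omega_def bnN r0_def)
        have gen: "S2 = 2 * A \<Longrightarrow> d * (inverse r0 / 2) * S2 = d / r0 * A" for S2 A d :: real
          by (simp add: field_simps)
        show ?thesis unfolding om by (rule gen) (rule s2)
      qed
    qed
    ultimately show ?thesis by (simp add: bnN)
  next
    case True
    have e0: "(V *v x0 - c)$p = 0" if "p \<in> P" for p
    proof -
      have fin: "finite P" by (rule finite)
      have "((V *v x0 - c)$p)^2 = 0"
        using True sum_nonneg_eq_0_iff[OF fin, of "\<lambda>p. ((V *v x0 - c)$p)^2"] that unfolding N_def by simp
      then show ?thesis by simp
    qed
    have e0': "(V *v x0)$p = c$p" if "p \<in> P" for p using e0[OF that] by simp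
    have tgt: "(\<lambda>h. omega \<psi> (bn x0) * (\<Sum>p\<in>P. (V *v x0 - c)$p * (V *v h)$p)) = (\<lambda>h. 0)"
      by (rule ext) (use e0 in \<open>simp add: sum.neutral\<close>)
    have bn0: "bn x0 = 0" using True bnN by simp
    obtain K where K: "K > 0" "\<And>h. norm (V *v h) \<le> norm h * K"
      using bounded_linear.pos_bounded[OF matrix_vector_mul_bounded_linear[of V]] by blast
    have Ny: "N y \<le> (norm (y - x0) * K)^2" for y
    proof -
      have "N y = (\<Sum>p\<in>P. ((V *v (y - x0))$p)^2)"
        unfolding N_def by (rule sum.cong) (auto simp: matrix_vector_mult_diff_distrib e0')
      also have "\<dots> \<le> (norm (V *v (y - x0)))^2" by (rule sumsq_le_norm)
      also have "\<dots> \<le> (norm (y - x0) * K)^2" using K(2)[of "y - x0"] by (intro power_mono) auto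
      finally show ?thesis .
    qed
    have bound: "norm ((\<psi> (bn y) - \<psi> (bn x0)) - 0) / norm (y - x0) \<le> l / 2 * K^2 * norm (y - x0)" for y
    proof (cases "y = x0")
      case True then show ?thesis by simp
    next
      case False
      have lo: "\<psi> 0 \<le> \<psi> (bn y)" using mono0[of "bn y"] bnN N0 by simp
      have hi: "\<psi> (bn y) \<le> \<psi> 0 + l / 2 * (bn y)^2"
        using majorize[of "bn y" 0] bnN N0 omega0 by simp
      have "(bn y)^2 = N y" using bnN N0 by simp
      then have "\<psi> (bn y) - \<psi> 0 \<le> l / 2 * (norm (y - x0) * K)^2"
        using hi Ny[of y] l_nonneg by (smt (verit) mult_left_mono divide_nonneg_pos)
      then have "norm (\<psi> (bn y) - \<psi> 0) \<le> l / 2 * K^2 * norm (y - x0) * norm (y - x0)"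
        using lo by (simp add: power2_eq_square algebra_simps)
      then show ?thesis using False bn0 by (simp add: divide_le_eq)
    qed
    have "((\<lambda>y. norm ((\<psi> (bn y) - \<psi> (bn x0)) - 0) / norm (y - x0)) \<longlongrightarrow> 0) (at x0)"
    proof (rule Lim_null_comparison)
      show "\<forall>\<^sub>F y in at x0. norm (norm ((\<psi> (bn y) - \<psi> (bn x0)) - 0) / norm (y - x0)) \<le> l / 2 * K^2 * norm (y - x0)"
        using bound by simp
      have "((\<lambda>y. l / 2 * K^2 * norm (y - x0)) \<longlongrightarrow> l / 2 * K^2 * norm (x0 - x0)) (at x0)"
        by (intro tendsto_intros)
      then show "((\<lambda>y. l / 2 * K^2 * norm (y - x0)) \<longlongrightarrow> 0) (at x0)" by simp
    qed
    then have "((\<lambda>x. \<psi> (bn x)) has_derivative (\<lambda>h. 0)) (at x0)"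
      unfolding has_derivative_iff_norm by simp
    then show ?thesis using tgt by simp
  qed
qed

lemma qHH: fixes H :: "real^'n^'q" shows "d \<bullet> ((transpose H ** H) *v d) = (norm (H *v d))^2"
  by (simp add: mv2 power2_norm_eq_inner mv_inner[of H d "H *v d"])

lemma Diag_mv: "Diag b *v z = (\<chi> p. b$p * z$p)"
proof -
  have "(\<Sum>j\<in>UNIV. (if i = j then b $ i else 0) * z $ j) = b$i * z$i" for i
  proof -
    have "(\<Sum>j\<in>UNIV. (if i = j then b $ i else 0) * z $ j) = (\<Sum>j\<in>UNIV. if i = j then b $ i * z $ j else 0)"
      by (rule sum.cong) auto
    then show ?thesis by simp
  qed
  then show ?thesis by (simp add: Diag_def matrix_vector_mult_def vec_eq_iff)
qed

lemma transpose_add: "transpose (A + B) = transpose A + transpose (B :: 'a::semiring_1^'n^'m)"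
  by (simp add: transpose_def vec_eq_iff)

lemma transpose_Diag: "transpose (Diag b) = Diag b"
  by (simp add: Diag_def transpose_def vec_eq_iff)

lemma qVDV: fixes V :: "real^'n^'p"
  shows "d \<bullet> ((transpose V ** Diag b ** V) *v d) = (\<Sum>p\<in>UNIV. b$p * ((V *v d)$p)^2)"
proof -
  have "d \<bullet> ((transpose V ** Diag b ** V) *v d) = (V *v d) \<bullet> (Diag b *v (V *v d))"
    by (simp add: mv3 mv_inner[of V d])
  also have "\<dots> = (\<Sum>p\<in>UNIV. b$p * ((V *v d)$p)^2)"
    by (simp add: Diag_mv inner_vec_def power2_eq_square algebra_simps)
  finally show ?thesis .
qed

lemma sym_Amat: "transpose (Amat \<mu> H V0 psi \<delta> V c blk x) = Amat \<mu> H V0 psi \<delta> V c blk x"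
  by (simp add: Amat_def transpose_Diag matrix_transpose_mul matrix_mul_assoc transpose_add
      transpose_scalar)

lemma blocksum:
  fixes blk :: "'p::finite \<Rightarrow> nat"
  assumes "blk ` UNIV \<subseteq> {1..S}"
  shows "(\<Sum>s=1..S. \<Sum>p\<in>{p. blk p = s}. f p) = (\<Sum>p\<in>UNIV. f p)"
  using sum.group[of UNIV "{1..S}" blk f] assms by (simp add: finite_UNIV)

lemma F_deriv:
  fixes \<Phi> :: "real^'q \<Rightarrow> real" and H :: "real^'n^'q" and y :: "real^'q"
    and V0 :: "real^'n^'r" and V :: "real^'n^'p" and c :: "real^'p" and blk :: "'p \<Rightarrow> nat"
    and S :: nat and psi :: "nat \<Rightarrow> real \<Rightarrow> real \<Rightarrow> real" and \<delta> :: real and lv :: "nat \<Rightarrow> real"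
  assumes blocks: "blk ` UNIV \<subseteq> {1..S}"
    and diffP: "\<And>z. \<Phi> differentiable (at z)"
    and pok: "\<And>s. s \<in> {1..S} \<Longrightarrow> psi_ok (psi s \<delta>) (lv s)"
  shows "(Fdelta \<Phi> H y psi \<delta> S V c blk V0 has_derivative (\<lambda>h.
      (transpose H *v grad \<Phi> (H *v x' - y)
       + transpose V *v (Diag (\<chi> p. omega (psi (blk p) \<delta>) (blocknorm V c blk (blk p) x')) *v (V *v x' - c))
       + 2 *\<^sub>R (transpose V0 *v (V0 *v x'))) \<bullet> h)) (at x')"
proof -
  define b where "b = (\<chi> p. omega (psi (blk p) \<delta>) (blocknorm V c blk (blk p) x'))"
  define e where "e = V *v x' - c"
  define g where "g = grad \<Phi> (H *v x' - y)"
  have d1: "((\<lambda>x. \<Phi> (H *v x - y)) has_derivative (\<lambda>h. g \<bullet> (H *v h))) (at x')"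
  proof -
    have dA: "((\<lambda>x. H *v x - y) has_derivative (\<lambda>h. H *v h - 0)) (at x')"
      by (intro has_derivative_diff bounded_linear.has_derivative[OF matrix_vector_mul_bounded_linear]
          has_derivative_const has_derivative_ident)
    show ?thesis using has_derivative_compose[OF dA grad_works[OF diffP]] by (simp add: g_def)
  qed
  have d2: "((\<lambda>x. \<Sum>s=1..S. psi s \<delta> (blocknorm V c blk s x)) has_derivative
      (\<lambda>h. \<Sum>s=1..S. omega (psi s \<delta>) (blocknorm V c blk s x') *
              (\<Sum>p\<in>{p. blk p = s}. (V *v x' - c)$p * (V *v h)$p))) (at x')"
  proof (rule has_derivative_sum)
    fix s assume s: "s \<in> {1..S}"
    show "((\<lambda>x. psi s \<delta> (blocknorm V c blk s x)) has_derivative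
      (\<lambda>h. omega (psi s \<delta>) (blocknorm V c blk s x') *
              (\<Sum>p\<in>{p. blk p = s}. (V *v x' - c)$p * (V *v h)$p))) (at x')"
      using psi_ok.psi_bn_deriv[OF pok[OF s], of V c "{p. blk p = s}" x'] unfolding blocknorm_def .
  qed
  have d3: "((\<lambda>x. (V0 *v x) \<bullet> (V0 *v x)) has_derivative
      (\<lambda>h. (V0 *v x') \<bullet> (V0 *v h) + (V0 *v h) \<bullet> (V0 *v x'))) (at x')"
    by (intro has_derivative_inner bounded_linear.has_derivative[OF matrix_vector_mul_bounded_linear]
        has_derivative_ident)
  have F_eq: "Fdelta \<Phi> H y psi \<delta> S V c blk V0 = (\<lambda>x. \<Phi> (H *v x - y) + (\<Sum>s=1..S. psi s \<delta> (blocknorm V c blk s x)) + (V0 *v x) \<bullet> (V0 *v x))"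
    by (rule ext) (simp add: Fdelta_def power2_norm_eq_inner)
  have dall: "(Fdelta \<Phi> H y psi \<delta> S V c blk V0 has_derivative (\<lambda>h. g \<bullet> (H *v h) +
      (\<Sum>s=1..S. omega (psi s \<delta>) (blocknorm V c blk s x') *
              (\<Sum>p\<in>{p. blk p = s}. (V *v x' - c)$p * (V *v h)$p)) +
      ((V0 *v x') \<bullet> (V0 *v h) + (V0 *v h) \<bullet> (V0 *v x')))) (at x')"
    unfolding F_eq by (intro has_derivative_add d1 d2 d3)
  have eq2: "(\<Sum>s=1..S. omega (psi s \<delta>) (blocknorm V c blk s x') *
              (\<Sum>p\<in>{p. blk p = s}. (V *v x' - c)$p * (V *v h)$p))
          = (transpose V *v (Diag b *v e)) \<bullet> h" for h
  proof -
    have "(\<Sum>s=1..S. omega (psi s \<delta>) (blocknorm V c blk s x') *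
              (\<Sum>p\<in>{p. blk p = s}. (V *v x' - c)$p * (V *v h)$p))
        = (\<Sum>s=1..S. \<Sum>p\<in>{p. blk p = s}. b$p * e$p * (V *v h)$p)"
      by (rule sum.cong[OF refl]) (auto simp: sum_distrib_left b_def e_def mult.assoc intro!: sum.cong)
    also have "\<dots> = (\<Sum>p\<in>UNIV. b$p * e$p * (V *v h)$p)" by (rule blocksum[OF blocks])
    also have "\<dots> = (Diag b *v e) \<bullet> (V *v h)" by (simp add: Diag_mv inner_vec_def)
    also have "\<dots> = (transpose V *v (Diag b *v e)) \<bullet> h"
      by (simp add: mv_inner[of V h] inner_commute)
    finally show ?thesis .
  qed
  have eq1: "g \<bullet> (H *v h) = (transpose H *v g) \<bullet> h" for h
    by (metis dot_lmul_matrix inner_commute transpose_matrix_vector)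
  have eq3: "(V0 *v x') \<bullet> (V0 *v h) + (V0 *v h) \<bullet> (V0 *v x') = (2 *\<^sub>R (transpose V0 *v (V0 *v x'))) \<bullet> h" for h
    by (simp add: mv_inner[of V0 h] inner_commute)
  have eqfun: "(\<lambda>h. g \<bullet> (H *v h) +
      (\<Sum>s=1..S. omega (psi s \<delta>) (blocknorm V c blk s x') *
              (\<Sum>p\<in>{p. blk p = s}. (V *v x' - c)$p * (V *v h)$p)) +
      ((V0 *v x') \<bullet> (V0 *v h) + (V0 *v h) \<bullet> (V0 *v x')))
    = (\<lambda>h. (transpose H *v g + transpose V *v (Diag b *v e) + 2 *\<^sub>R (transpose V0 *v (V0 *v x'))) \<bullet> h)"
    by (rule ext) (simp only: eq1 eq2 eq3 inner_add_left)
  show ?thesis using dall[unfolded eqfun] unfolding b_def e_def g_def .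
qed

lemma F_major:
  fixes \<Phi> :: "real^'q \<Rightarrow> real" and H :: "real^'n^'q" and y :: "real^'q"
    and V0 :: "real^'n^'r" and V :: "real^'n^'p" and c :: "real^'p" and blk :: "'p \<Rightarrow> nat"
    and S :: nat and psi :: "nat \<Rightarrow> real \<Rightarrow> real \<Rightarrow> real" and \<delta> L \<mu> :: real and lv :: "nat \<Rightarrow> real"
  assumes blocks: "blk ` UNIV \<subseteq> {1..S}"
    and diffP: "\<And>z. \<Phi> differentiable (at z)"
    and lip: "\<And>z w. norm (grad \<Phi> z - grad \<Phi> w) \<le> L * norm (z - w)"
    and mu: "\<mu> \<ge> L"
    and pok: "\<And>s. s \<in> {1..S} \<Longrightarrow> psi_ok (psi s \<delta>) (lv s)"
  shows "Fdelta \<Phi> H y psi \<delta> S V c blk V0 x \<le> Fdelta \<Phi> H y psi \<delta> S V c blk V0 x' +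
      (transpose H *v grad \<Phi> (H *v x' - y)
       + transpose V *v (Diag (\<chi> p. omega (psi (blk p) \<delta>) (blocknorm V c blk (blk p) x')) *v (V *v x' - c))
       + 2 *\<^sub>R (transpose V0 *v (V0 *v x'))) \<bullet> (x - x')
      + 1/2 * ((x - x') \<bullet> (Amat \<mu> H V0 psi \<delta> V c blk x' *v (x - x')))"
proof -
  define b where "b = (\<chi> p. omega (psi (blk p) \<delta>) (blocknorm V c blk (blk p) x'))"
  define e where "e = V *v x' - c"
  define g where "g = grad \<Phi> (H *v x' - y)"
  define d where "d = x - x'"
  define N where "N s z = (\<Sum>p\<in>{p. blk p = s}. ((V *v z - c)$p)^2)" for s z
  have Lnn: "L \<ge> 0"
  proof -
    have "0 \<le> L * norm ((axis undefined (1::real) :: real^'q) - 0)" by (rule order_trans[OF norm_ge_zero lip])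
    then show ?thesis by simp
  qed
  have h1: "\<Phi> (H *v x - y) \<le> \<Phi> (H *v x' - y) + (transpose H *v g) \<bullet> d + \<mu> / 2 * (norm (H *v d))^2"
  proof -
    have Hd: "(H *v x - y) - (H *v x' - y) = H *v d" by (simp add: d_def matrix_vector_mult_diff_distrib)
    have "\<Phi> (H *v x - y) \<le> \<Phi> (H *v x' - y) + g \<bullet> (H *v d) + L / 2 * (norm (H *v d))^2"
      using descent[OF diffP lip, of "H *v x - y" "H *v x' - y"] unfolding Hd g_def .
    moreover have "L / 2 * (norm (H *v d))^2 \<le> \<mu> / 2 * (norm (H *v d))^2"
      using mu by (intro mult_right_mono) auto
    moreover have "g \<bullet> (H *v d) = (transpose H *v g) \<bullet> d"
      by (metis dot_lmul_matrix inner_commute transpose_matrix_vector)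
    ultimately show ?thesis by linarith
  qed
  have bnN: "blocknorm V c blk s z = sqrt (N s z)" for s z by (simp add: blocknorm_def N_def)
  have Nnn: "N s z \<ge> 0" for s z by (simp add: N_def sum_nonneg)
  have h2: "(\<Sum>s=1..S. psi s \<delta> (blocknorm V c blk s x)) \<le>
      (\<Sum>s=1..S. psi s \<delta> (blocknorm V c blk s x')) +
      (\<Sum>s=1..S. omega (psi s \<delta>) (blocknorm V c blk s x') / 2 * (N s x - N s x'))"
  proof -
    have "(\<Sum>s=1..S. psi s \<delta> (blocknorm V c blk s x)) \<le>
      (\<Sum>s=1..S. psi s \<delta> (blocknorm V c blk s x') + omega (psi s \<delta>) (blocknorm V c blk s x') / 2 * (N s x - N s x'))"
    proof (rule sum_mono)
      fix s assume s: "s \<in> {1..S}"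
      show "psi s \<delta> (blocknorm V c blk s x) \<le> psi s \<delta> (blocknorm V c blk s x') + omega (psi s \<delta>) (blocknorm V c blk s x') / 2 * (N s x - N s x')"
        using psi_ok.majorize[OF pok[OF s], of "blocknorm V c blk s x" "blocknorm V c blk s x'"]
        by (simp add: bnN Nnn)
    qed
    then show ?thesis by (simp add: sum.distrib)
  qed
  have h3: "(\<Sum>s=1..S. omega (psi s \<delta>) (blocknorm V c blk s x') / 2 * (N s x - N s x'))
      = (transpose V *v (Diag b *v e)) \<bullet> d + 1/2 * (\<Sum>p\<in>UNIV. b$p * ((V *v d)$p)^2)"
  proof -
    have Vx: "(V *v x - c)$p = e$p + (V *v d)$p" for p
      by (simp add: e_def d_def matrix_vector_mult_diff_distrib)
    have Nd: "N s x - N s x' = (\<Sum>p\<in>{p. blk p = s}. 2 * e$p * (V *v d)$p + ((V *v d)$p)^2)" for s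
      unfolding N_def Vx e_def[symmetric] by (simp add: sum_subtractf[symmetric] power2_eq_square algebra_simps)
    have "(\<Sum>s=1..S. omega (psi s \<delta>) (blocknorm V c blk s x') / 2 * (N s x - N s x'))
        = (\<Sum>s=1..S. \<Sum>p\<in>{p. blk p = s}. b$p / 2 * (2 * e$p * (V *v d)$p + ((V *v d)$p)^2))"
      unfolding Nd by (rule sum.cong[OF refl]) (auto simp: sum_distrib_left b_def intro!: sum.cong)
    also have "\<dots> = (\<Sum>p\<in>UNIV. b$p / 2 * (2 * e$p * (V *v d)$p + ((V *v d)$p)^2))"
      by (rule blocksum[OF blocks])
    also have "\<dots> = (\<Sum>p\<in>UNIV. b$p * e$p * (V *v d)$p) + 1/2 * (\<Sum>p\<in>UNIV. b$p * ((V *v d)$p)^2)"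
      by (simp add: sum.distrib sum_distrib_left algebra_simps)
    also have "(\<Sum>p\<in>UNIV. b$p * e$p * (V *v d)$p) = (transpose V *v (Diag b *v e)) \<bullet> d"
    proof -
      have "(\<Sum>p\<in>UNIV. b$p * e$p * (V *v d)$p) = (Diag b *v e) \<bullet> (V *v d)" by (simp add: Diag_mv inner_vec_def)
      also have "\<dots> = (transpose V *v (Diag b *v e)) \<bullet> d"
        by (simp add: mv_inner[of V d] inner_commute)
      finally show ?thesis .
    qed
    finally show ?thesis .
  qed
  have h4: "(norm (V0 *v x))^2 = (norm (V0 *v x'))^2 + (2 *\<^sub>R (transpose V0 *v (V0 *v x'))) \<bullet> d + (norm (V0 *v d))^2"
  proof -
    have "V0 *v x = V0 *v x' + V0 *v d" by (simp add: d_def matrix_vector_mult_diff_distrib)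
    then have "(norm (V0 *v x))^2 = (norm (V0 *v x'))^2 + 2 * ((V0 *v x') \<bullet> (V0 *v d)) + (norm (V0 *v d))^2"
      by (simp add: power2_norm_eq_inner inner_add_left inner_add_right inner_commute)
    moreover have "(V0 *v x') \<bullet> (V0 *v d) = (transpose V0 *v (V0 *v x')) \<bullet> d"
      by (simp add: mv_inner[of V0 d] inner_commute)
    ultimately show ?thesis by simp
  qed
  have h5: "d \<bullet> (Amat \<mu> H V0 psi \<delta> V c blk x' *v d) =
      \<mu> * (norm (H *v d))^2 + 2 * (norm (V0 *v d))^2 + (\<Sum>p\<in>UNIV. b$p * ((V *v d)$p)^2)"
  proof -
    have "Amat \<mu> H V0 psi \<delta> V c blk x' *v d =
        \<mu> *\<^sub>R ((transpose H ** H) *v d) + 2 *\<^sub>R ((transpose V0 ** V0) *v d) + (transpose V ** Diag b ** V) *v d"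
      by (simp add: Amat_def b_def matrix_vector_mult_add_rdistrib scaleR_matrix_vector_assoc)
    then show ?thesis by (simp add: inner_add_right qHH qVDV)
  qed
  have FF: "Fdelta \<Phi> H y psi \<delta> S V c blk V0 z = \<Phi> (H *v z - y) + (\<Sum>s=1..S. psi s \<delta> (blocknorm V c blk s z)) + (norm (V0 *v z))^2" for z
    by (simp add: Fdelta_def)
  show ?thesis
    unfolding FF d_def[symmetric] b_def[symmetric] e_def[symmetric] g_def[symmetric]
    using h1 h2 h3 h4 h5 by (simp add: inner_add_left algebra_simps)
qed

lemma pinv_step:
  fixes D :: "real^'m^'n" and A M :: "real^'n^'n" and G :: "real^'n"
  assumes symA: "transpose A = A"
    and AM: "\<And>z. z \<bullet> (M *v z) \<le> z \<bullet> (A *v z)"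
    and eta: "\<And>z. \<eta> * (norm z)^2 \<le> z \<bullet> (M *v z)"
    and maj: "F2 \<le> F1 + G \<bullet> d + 1/2 * (d \<bullet> (A *v d))"
    and d: "d = - (D *v (pinv (transpose D ** A ** D) *v (transpose D *v G)))"
  shows "F1 - F2 \<ge> \<eta> / 2 * (norm d)^2"
proof -
  define B where "B = transpose D ** A ** D"
  define X where "X = pinv B"
  define gD where "gD = transpose D *v G"
  define w where "w = X *v gD"
  have symB: "transpose B = B" unfolding B_def
    by (simp add: matrix_transpose_mul symA matrix_mul_assoc)
  have PB: "penrose B X" and symX: "transpose X = X" using pinv_sym[OF symB] X_def by auto
  have XBX: "X ** B ** X = X" using PB by (simp add: penrose_def)
  have dw: "d = - (D *v w)" using d by (simp add: w_def X_def B_def gD_def)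
  have t1: "G \<bullet> (D *v w) = gD \<bullet> w"
    unfolding gD_def by (metis dot_lmul_matrix inner_commute transpose_matrix_vector)
  have t2: "(D *v w) \<bullet> (A *v (D *v w)) = w \<bullet> (B *v w)"
    by (simp add: B_def mv3 mv_inner[of D w])
  have t3: "w \<bullet> (B *v w) = gD \<bullet> w"
  proof -
    have "w \<bullet> (B *v w) = gD \<bullet> (transpose X *v (B *v (X *v gD)))"
      by (simp add: w_def mv_inner[of X gD])
    also have "\<dots> = gD \<bullet> ((X ** B ** X) *v gD)" by (simp add: symX mv3)
    also have "\<dots> = gD \<bullet> w" by (simp add: XBX w_def)
    finally show ?thesis .
  qed
  have q: "\<eta> * (norm (D *v w))^2 \<le> w \<bullet> (B *v w)"
    using eta[of "D *v w"] AM[of "D *v w"] t2 by linarith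
  have "G \<bullet> d + 1/2 * (d \<bullet> (A *v d)) = - (w \<bullet> (B *v w)) + 1/2 * (w \<bullet> (B *v w))"
  proof -
    have neg: "A *v (- z) = - (A *v z)" for z
      by (metis matrix_vector_mult_diff_distrib matrix_vector_mult_0_right diff_0)
    show ?thesis using t1 t2 t3 by (simp add: dw neg)
  qed
  then have "F1 - F2 \<ge> 1/2 * (w \<bullet> (B *v w))" using maj by linarith
  moreover have "norm d = norm (D *v w)" by (simp add: dw)
  ultimately show ?thesis using q by simp
qed

lemma L_pos:
  fixes \<Phi> :: "'a::euclidean_space \<Rightarrow> real"
  assumes coer: "coercive \<Phi>"
    and diffP: "\<And>z. \<Phi> differentiable (at z)"
    and lip: "\<And>z w. norm (grad \<Phi> z - grad \<Phi> w) \<le> L * norm (z - w)"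
  shows "L > 0"
proof (rule ccontr)
  assume "\<not> L > 0"
  then have L0: "L \<le> 0" by simp
  define g where "g = grad \<Phi> 0"
  have gc: "grad \<Phi> z = g" for z
  proof -
    have "norm (grad \<Phi> z - grad \<Phi> 0) \<le> L * norm (z - 0)" by (rule lip)
    also have "\<dots> \<le> 0" using L0 by (simp add: mult_nonpos_nonneg)
    finally show ?thesis by (simp add: g_def)
  qed
  have "\<exists>c. \<forall>x\<in>UNIV. \<Phi> x - g \<bullet> x = c"
  proof (rule has_derivative_zero_constant)
    fix x :: 'a
    have "((\<lambda>x. \<Phi> x - g \<bullet> x) has_derivative (\<lambda>h. grad \<Phi> x \<bullet> h - g \<bullet> h)) (at x)"
      by (intro has_derivative_diff grad_works[OF diffP] bounded_linear.has_derivative[OF bounded_linear_inner_right]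
          has_derivative_ident)
    then show "((\<lambda>x. \<Phi> x - g \<bullet> x) has_derivative (\<lambda>h. 0)) (at x within UNIV)"
      by (simp add: gc)
  qed simp
  then obtain c0 where hc: "\<forall>x\<in>UNIV. \<Phi> x - g \<bullet> x = c0" by blast
  have c0: "\<Phi> x = c0 + g \<bullet> x" for x using hc by (metis UNIV_I diff_eq_eq add.commute)
  define v :: 'a where "v = (if g = 0 then (SOME b. b \<in> Basis) else - g)"
  have vnz: "v \<noteq> 0"
  proof (cases "g = 0")
    case True
    have "(SOME b. b \<in> (Basis::'a set)) \<in> Basis" by (rule someI_ex) (use nonempty_Basis in blast)
    then show ?thesis using True nonzero_Basis by (simp add: v_def)
  next
    case False then show ?thesis by (simp add: v_def)
  qed
  have gv: "g \<bullet> v \<le> 0" by (simp add: v_def)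
  have "eventually (\<lambda>x. c0 + 1 \<le> \<Phi> x) at_infinity"
    using coer unfolding coercive_def filterlim_at_top by blast
  then obtain b where b: "\<And>x. b \<le> norm x \<Longrightarrow> c0 + 1 \<le> \<Phi> x" unfolding eventually_at_infinity by blast
  define t where "t = (\<bar>b\<bar> + 1) / norm v"
  have tp: "t > 0" using vnz by (simp add: t_def)
  have "norm (t *\<^sub>R v) = \<bar>b\<bar> + 1" using vnz tp by (simp add: t_def)
  then have "c0 + 1 \<le> \<Phi> (t *\<^sub>R v)" by (intro b) simp
  moreover have "\<Phi> (t *\<^sub>R v) \<le> c0" using c0 gv tp by (simp add: mult_nonneg_nonpos less_imp_le)
  ultimately show False by simp
qed

lemma M_pd:
  fixes H :: "real^'n^'q" and V0 :: "real^'n^'r"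
  assumes mu: "\<mu> > 0" and ker: "{z. H *v z = 0} \<inter> {z. V0 *v z = 0} = {0}"
  shows "transpose (\<mu> *\<^sub>R (transpose H ** H) + 2 *\<^sub>R (transpose V0 ** V0)) = \<mu> *\<^sub>R (transpose H ** H) + 2 *\<^sub>R (transpose V0 ** V0)"
    and "z \<bullet> ((\<mu> *\<^sub>R (transpose H ** H) + 2 *\<^sub>R (transpose V0 ** V0)) *v z) = \<mu> * (norm (H *v z))^2 + 2 * (norm (V0 *v z))^2"
    and "z \<noteq> 0 \<Longrightarrow> z \<bullet> ((\<mu> *\<^sub>R (transpose H ** H) + 2 *\<^sub>R (transpose V0 ** V0)) *v z) > 0"
proof -
  show "transpose (\<mu> *\<^sub>R (transpose H ** H) + 2 *\<^sub>R (transpose V0 ** V0)) = \<mu> *\<^sub>R (transpose H ** H) + 2 *\<^sub>R (transpose V0 ** V0)"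
    by (simp add: transpose_add transpose_scalar matrix_transpose_mul)
  show eq: "z \<bullet> ((\<mu> *\<^sub>R (transpose H ** H) + 2 *\<^sub>R (transpose V0 ** V0)) *v z) = \<mu> * (norm (H *v z))^2 + 2 * (norm (V0 *v z))^2" for z
    by (simp add: matrix_vector_mult_add_rdistrib scaleR_matrix_vector_assoc[symmetric] inner_add_right qHH)
  assume "z \<noteq> 0"
  then have "H *v z \<noteq> 0 \<or> V0 *v z \<noteq> 0" using ker by blast
  then have "\<mu> * (norm (H *v z))^2 + 2 * (norm (V0 *v z))^2 > 0"
    using mu by (auto intro: add_pos_nonneg add_nonneg_pos)
  then show "z \<bullet> ((\<mu> *\<^sub>R (transpose H ** H) + 2 *\<^sub>R (transpose V0 ** V0)) *v z) > 0" using eq by simp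
qed

theorem lemma3:
  fixes \<Phi> :: "real^'q \<Rightarrow> real"
    and H :: "real^'n^'q" and y :: "real^'q"
    and V0 :: "real^'n^'r"
    and V :: "real^'n^'p" and c :: "real^'p" and blk :: "'p \<Rightarrow> nat"
    and S J :: nat
    and psi :: "nat \<Rightarrow> real \<Rightarrow> real \<Rightarrow> real"
    and \<delta> L \<mu> :: real
    and D :: "nat \<Rightarrow> real^'m^'n"
    and x :: "nat \<Rightarrow> real^'n" and u :: "nat \<Rightarrow> nat \<Rightarrow> real^'m"
  assumes MN: "CARD('m) \<le> CARD('n)"
    and J: "J \<ge> 1"
    and Hnz: "H \<noteq> 0"
    and blocks: "blk ` UNIV = {1..S}"
    and A1i: "continuous_on UNIV \<Phi>" "coercive \<Phi>"
    and A1ii: "\<And>s d. d > 0 \<Longrightarrow> s \<in> {1..S} \<Longrightarrow>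
                  continuous_on UNIV (psi s d) \<and> (\<forall>t. psi s d t \<ge> 0)"
    and A1iii: "{z. H *v z = 0} \<inter> {z. V0 *v z = 0} = {0}"
    and delta: "\<delta> > 0"
    and A3i: "\<And>z. \<Phi> differentiable (at z)"
             "\<And>z w. norm (grad \<Phi> z - grad \<Phi> w) \<le> L * norm (z - w)"
    and A3ii: "\<And>s t. s \<in> {1..S} \<Longrightarrow> psi s \<delta> differentiable (at t)"
    and A3iii: "\<And>s. s \<in> {1..S} \<Longrightarrow> concave_on {0..} (\<lambda>t. psi s \<delta> (sqrt t))"
    and A3iv: "\<And>s. s \<in> {1..S} \<Longrightarrow>
                 (\<exists>\<omega>\<ge>0. \<forall>t>0. 0 \<le> deriv (psi s \<delta>) t \<and> deriv (psi s \<delta>) t \<le> \<omega> * t)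
               \<and> (\<exists>l::real. ((\<lambda>t. deriv (psi s \<delta>) t / t) \<longlongrightarrow> l) (at 0))"
    and mu: "\<mu> \<ge> L"
    and u0: "\<And>k. u k 0 = 0"
    and uS: "\<And>k j. j < J \<Longrightarrow>
               u k (Suc j) = u k j -
                 pinv (transpose (D k) ** Amat \<mu> H V0 psi \<delta> V c blk (x k + D k *v u k j) ** D k)
                   *v (transpose (D k) *v grad (Fdelta \<Phi> H y psi \<delta> S V c blk V0) (x k + D k *v u k j))"
    and xS: "\<And>k. x (Suc k) = x k + D k *v u k J"
  shows "min_eigenvalue (\<mu> *\<^sub>R (transpose H ** H) + 2 *\<^sub>R (transpose V0 ** V0)) > 0 \<and>
         (\<forall>k j. j < J \<longrightarrow>
            Fdelta \<Phi> H y psi \<delta> S V c blk V0 (x k + D k *v u k j)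
              - Fdelta \<Phi> H y psi \<delta> S V c blk V0 (x k + D k *v u k (Suc j))
            \<ge> min_eigenvalue (\<mu> *\<^sub>R (transpose H ** H) + 2 *\<^sub>R (transpose V0 ** V0)) / 2
               * (norm ((x k + D k *v u k (Suc j)) - (x k + D k *v u k j)))^2)"
proof -
  define M where "M = \<mu> *\<^sub>R (transpose H ** H) + 2 *\<^sub>R (transpose V0 ** V0)"
  have Lp: "L > 0" by (rule L_pos[OF A1i(2) A3i(1) A3i(2)])
  have mup: "\<mu> > 0" using Lp mu by simp
  have symM: "transpose M = M" unfolding M_def by (rule M_pd(1)[OF mup A1iii])
  have pdM: "z \<noteq> 0 \<Longrightarrow> z \<bullet> (M *v z) > 0" for z unfolding M_def by (rule M_pd(3)[OF mup A1iii])
  have eig: "min_eigenvalue M > 0 \<and> (\<forall>x. min_eigenvalue M * (norm x)^2 \<le> x \<bullet> (M *v x))"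
    by (rule min_eig[OF symM pdM])
  define lv where "lv s = (SOME l. ((\<lambda>t. deriv (psi s \<delta>) t / t) \<longlongrightarrow> l) (at 0))" for s
  have pok: "psi_ok (psi s \<delta>) (lv s)" if s: "s \<in> {1..S}" for s
  proof (rule psi_ok.intro)
    show "continuous_on UNIV (psi s \<delta>)" using A1ii[OF delta s] by blast
    show "\<And>t. psi s \<delta> differentiable (at t)" using A3ii[OF s] .
    show "concave_on {0..} (\<lambda>t. psi s \<delta> (sqrt t))" using A3iii[OF s] .
    show "\<And>t. t > 0 \<Longrightarrow> 0 \<le> deriv (psi s \<delta>) t" using A3iv[OF s] by blast
    have "\<exists>l::real. ((\<lambda>t. deriv (psi s \<delta>) t / t) \<longlongrightarrow> l) (at 0)" using A3iv[OF s] by blast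
    then show "((\<lambda>t. deriv (psi s \<delta>) t / t) \<longlongrightarrow> lv s) (at 0)" unfolding lv_def by (rule someI_ex)
  qed
  have blocks': "blk ` UNIV \<subseteq> {1..S}" using blocks by simp
  have main: "Fdelta \<Phi> H y psi \<delta> S V c blk V0 (x k + D k *v u k j)
              - Fdelta \<Phi> H y psi \<delta> S V c blk V0 (x k + D k *v u k (Suc j))
            \<ge> min_eigenvalue M / 2
               * (norm ((x k + D k *v u k (Suc j)) - (x k + D k *v u k j)))^2" if j: "j < J" for k j
  proof -
    define x' where "x' = x k + D k *v u k j"
    define x'' where "x'' = x k + D k *v u k (Suc j)"
    define A where "A = Amat \<mu> H V0 psi \<delta> V c blk x'"
    define b where "b = (\<chi> p. omega (psi (blk p) \<delta>) (blocknorm V c blk (blk p) x'))"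
    define G where "G = transpose H *v grad \<Phi> (H *v x' - y)
       + transpose V *v (Diag (\<chi> p. omega (psi (blk p) \<delta>) (blocknorm V c blk (blk p) x')) *v (V *v x' - c))
       + 2 *\<^sub>R (transpose V0 *v (V0 *v x'))"
    have gradF: "grad (Fdelta \<Phi> H y psi \<delta> S V c blk V0) x' = G"
      unfolding G_def by (rule grad_unique[OF F_deriv[where psi=psi and \<delta>=\<delta> and lv=lv, OF blocks' A3i(1) pok]])
    have maj: "Fdelta \<Phi> H y psi \<delta> S V c blk V0 x'' \<le> Fdelta \<Phi> H y psi \<delta> S V c blk V0 x' + G \<bullet> (x'' - x')
        + 1/2 * ((x'' - x') \<bullet> (A *v (x'' - x')))"
      unfolding G_def A_def by (rule F_major[where psi=psi and \<delta>=\<delta> and lv=lv, OF blocks' A3i(1) A3i(2) mu pok])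
    have dd: "x'' - x' = - (D k *v (pinv (transpose (D k) ** A ** D k) *v (transpose (D k) *v G)))"
      unfolding x''_def x'_def uS[OF j] A_def gradF[unfolded x'_def]
      by (simp add: matrix_vector_mult_diff_distrib)
    have bnn: "b$p \<ge> 0" for p
    proof -
      have bp: "blk p \<in> {1..S}" using blocks' by blast
      have bn: "blocknorm V c blk (blk p) x' \<ge> 0" unfolding blocknorm_def
        by (intro real_sqrt_ge_zero sum_nonneg) simp
      show ?thesis unfolding b_def
        using psi_ok.omega_nonneg[OF pok[OF bp] bn] by simp
    qed
    have AM: "z \<bullet> (M *v z) \<le> z \<bullet> (A *v z)" for z
    proof -
      have "A *v z = M *v z + (transpose V ** Diag b ** V) *v z"
        by (simp add: A_def Amat_def M_def b_def matrix_vector_mult_add_rdistrib)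
      then have "z \<bullet> (A *v z) = z \<bullet> (M *v z) + (\<Sum>p\<in>UNIV. b$p * ((V *v z)$p)^2)"
        by (simp add: inner_add_right qVDV)
      moreover have "(\<Sum>p\<in>UNIV. b$p * ((V *v z)$p)^2) \<ge> 0" using bnn by (intro sum_nonneg) simp
      ultimately show ?thesis by simp
    qed
    have symA: "transpose A = A" unfolding A_def by (rule sym_Amat)
    have "Fdelta \<Phi> H y psi \<delta> S V c blk V0 x' - Fdelta \<Phi> H y psi \<delta> S V c blk V0 x''
        \<ge> min_eigenvalue M / 2 * (norm (x'' - x'))^2"
      by (rule pinv_step[OF symA AM _ maj dd]) (use eig in blast)
    then show ?thesis by (simp add: x'_def x''_def)
  qed
  show ?thesis using eig main unfolding M_def by blast
qed

end
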